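(* Let $k,n$ be positive integers with $k\leqslant n$, and let $X\subseteq [n]^k_<$ have the quasi-exchange property. Then every linear extension of $X$ (with respect to the Bruhat order) is a shelling order.
   Context: $[n]:=\{1,\ldots,n\}$. $[n]^k_<$ denotes the set of $k$-element subsets of $[n]$, each identified with the increasing tuple $x=(x_1<\cdots<x_k)$ of its elements (so set operations $\cap,\cup,\setminus$ and the symmetric difference $A+B:=(A\setminus B)\cup(B\setminus A)$ make sense). A subset $X\subseteq[n]^k_<$ is viewed as (the set of facets of) a pure $(k-1)$-dimensional simplicial complex. The Bruhat order on $[n]^k_<$ is: $x\leqslant y$ iff $x_i\leqslant y_i$ for all $i\in[k]$. $\mathrm{Conf}([n]^k_<)$ is the set of finite tuples $C=(C_1,\ldots,C_h)$, $h\geqslant 1$, of pairwise distinct elements of $[n]^k_<$. A linear extension of $X$ is a tuple $L=(L_1,\ldots,L_h)$ listing every element of $X$ exactly once such that $L_i<L_j$ in the Bruhat order implies $i<j$. A tuple $C=(C_1,\ldots,C_h)\in\mathrm{Conf}([n]^k_<)$ is a shelling order if for all $i<j$ in $[h]$ there exists $z<j$ with $|C_z\cap C_j|=k-1$ and $C_i\cap C_j\subseteq C_z\cap C_j$. $X$ has the quasi-exchange property if for all $x,y\in X$ and every $i\in x\setminus y$ with $i>\max(y\setminus x)$, there exists $j\in y\setminus x$ such that $x+\{i,j\}\in X$. *)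

theory Defs
  imports Main
begin

text \<open>k-element subsets of [n] = {1..n}; the increasing tuple of A is sorted_list_of_set A.\<close>
definition ksubsets :: "nat \<Rightarrow> nat \<Rightarrow> nat set set" where
  "ksubsets n k = {A. A \<subseteq> {1..n} \<and> card A = k}"

definition bruhat_le :: "nat set \<Rightarrow> nat set \<Rightarrow> bool" where
  "bruhat_le x y \<longleftrightarrow> card x = card y \<and>
     (\<forall>i < card x. sorted_list_of_set x ! i \<le> sorted_list_of_set y ! i)"

definition bruhat_less :: "nat set \<Rightarrow> nat set \<Rightarrow> bool" where
  "bruhat_less x y \<longleftrightarrow> bruhat_le x y \<and> x \<noteq> y"

definition Conf :: "nat \<Rightarrow> nat \<Rightarrow> nat set list set" where
  "Conf n k = {C. C \<noteq> [] \<and> distinct C \<and> set C \<subseteq> ksubsets n k}"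

definition linear_extension :: "nat set set \<Rightarrow> nat set list \<Rightarrow> bool" where
  "linear_extension X L \<longleftrightarrow> distinct L \<and> set L = X \<and>
     (\<forall>i < length L. \<forall>j < length L. bruhat_less (L ! i) (L ! j) \<longrightarrow> i < j)"

definition shelling_order :: "nat \<Rightarrow> nat \<Rightarrow> nat set list \<Rightarrow> bool" where
  "shelling_order n k C \<longleftrightarrow> C \<in> Conf n k \<and>
     (\<forall>i j. i < j \<and> j < length C \<longrightarrow>
        (\<exists>z < j. card (C ! z \<inter> C ! j) = k - 1 \<and> C ! i \<inter> C ! j \<subseteq> C ! z \<inter> C ! j))"

definition sym_diff :: "'a set \<Rightarrow> 'a set \<Rightarrow> 'a set" where
  "sym_diff A B = (A - B) \<union> (B - A)"

text \<open>When y \<setminus> x is empty, the condition i > max(y\<setminus>x) is read as vacuously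
  true (max of empty set = -\<infinity>); for equal-size sets this case never arises with i \<in> x \<setminus> y anyway.\<close>
definition quasi_exchange :: "nat set set \<Rightarrow> bool" where
  "quasi_exchange X \<longleftrightarrow> (\<forall>x\<in>X. \<forall>y\<in>X. \<forall>i \<in> x - y.
      (\<forall>m \<in> y - x. m < i) \<longrightarrow> (\<exists>j \<in> y - x. sym_diff x {i, j} \<in> X))"

end

theory Submission
  imports Defs
begin

lemma sl_less_card:
  assumes "finite B" "i < card B"
  shows "card {v\<in>B. v < sorted_list_of_set B ! i} = i"
proof -
  let ?t = "sorted_list_of_set B"
  have len: "length ?t = card B" by simp
  have st: "set ?t = B" using assms by simp
  have ss: "sorted_wrt (<) ?t" by (rule strict_sorted_list_of_set)
  have dis: "distinct ?t" by simp
  have "{v\<in>B. v < ?t ! i} = (!) ?t ` {..<i}"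
  proof
    show "{v\<in>B. v < ?t ! i} \<subseteq> (!) ?t ` {..<i}"
    proof
      fix v assume "v \<in> {v\<in>B. v < ?t ! i}"
      then have v: "v \<in> set ?t" "v < ?t ! i" using st by auto
      then obtain m where m: "m < length ?t" "v = ?t ! m" by (metis in_set_conv_nth)
      have "m < i"
      proof (rule ccontr)
        assume "\<not> m < i"
        then have "?t ! i \<le> ?t ! m"
          using ss m len assms(2) by (metis linorder_not_less order.order_iff_strict sorted_wrt_iff_nth_less)
        then show False using v m by simp
      qed
      then show "v \<in> (!) ?t ` {..<i}" using m by auto
    qed
  next
    show "(!) ?t ` {..<i} \<subseteq> {v\<in>B. v < ?t ! i}"
    proof
      fix v assume "v \<in> (!) ?t ` {..<i}"
      then obtain m where m: "m < i" "v = ?t ! m" by auto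
      then have "v < ?t ! i" using ss len assms(2) sorted_wrt_iff_nth_less by metis
      moreover have "v \<in> B" using m len assms(2) st by (metis less_trans nth_mem)
      ultimately show "v \<in> {v\<in>B. v < ?t ! i}" by simp
    qed
  qed
  moreover have "inj_on ((!) ?t) {..<i}"
    using dis len assms(2) by (auto simp: inj_on_def nth_eq_iff_index_eq)
  ultimately show ?thesis by (simp add: card_image)
qed

lemma sl_le_card:
  assumes "finite B" "i < card B"
  shows "card {v\<in>B. v \<le> sorted_list_of_set B ! i} = Suc i"
proof -
  let ?u = "sorted_list_of_set B ! i"
  have uB: "?u \<in> B" using assms by (metis length_sorted_list_of_set nth_mem set_sorted_list_of_set)
  have "{v\<in>B. v \<le> ?u} = insert ?u {v\<in>B. v < ?u}" using uB by auto
  then show ?thesis using sl_less_card[OF assms] assms(1) by simp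
qed

lemma sl_bound:
  assumes "finite B" "i < card B" "Suc i \<le> card {v\<in>B. v \<le> u}"
  shows "sorted_list_of_set B ! i \<le> u"
proof (rule ccontr)
  assume "\<not> ?thesis"
  then have "{v\<in>B. v \<le> u} \<subseteq> {v\<in>B. v < sorted_list_of_set B ! i}" by auto
  then have "card {v\<in>B. v \<le> u} \<le> i" using sl_less_card[OF assms(1,2)] assms(1)
    by (metis (no_types, lifting) card_mono finite_subset mem_Collect_eq subsetI)
  then show False using assms(3) by simp
qed

lemma swap_count:
  fixes A :: "nat set"
  assumes "finite A" "a \<in> A" "b \<notin> A" "b < a"
  shows "card {v\<in>A. v \<le> u} \<le> card {v\<in>insert b (A - {a}). v \<le> u}"
proof -
  have inj: "inj_on (\<lambda>v. if v = a then b else v) {v\<in>A. v \<le> u}"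
    using assms by (auto simp: inj_on_def)
  have "(\<lambda>v. if v = a then b else v) ` {v\<in>A. v \<le> u} \<subseteq> {v\<in>insert b (A - {a}). v \<le> u}"
    using assms by (auto split: if_splits)
  moreover have "finite {v\<in>insert b (A - {a}). v \<le> u}" using assms by simp
  ultimately show ?thesis using card_inj_on_le[OF inj] by blast
qed

lemma swap_bruhat:
  fixes A :: "nat set"
  assumes "finite A" "a \<in> A" "b \<notin> A" "b < a"
  shows "bruhat_less (insert b (A - {a})) A"
proof -
  let ?A' = "insert b (A - {a})"
  have fA': "finite ?A'" using assms by simp
  have c1: "card (A - {a}) = card A - 1" using assms by simp
  have c0: "card A > 0" using assms card_gt_0_iff by blast
  have cA: "card ?A' = card A" using assms c1 c0 by simp
  have "sorted_list_of_set ?A' ! i \<le> sorted_list_of_set A ! i" if "i < card A" for i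
  proof -
    have "Suc i \<le> card {v\<in>?A'. v \<le> sorted_list_of_set A ! i}"
      using sl_le_card[OF assms(1) that] swap_count[OF assms] by metis
    then show ?thesis using sl_bound[OF fA'] cA that by simp
  qed
  moreover have "?A' \<noteq> A" using assms by auto
  ultimately show ?thesis unfolding bruhat_less_def bruhat_le_def using cA by simp
qed

lemma sym_diff_swap: "i \<in> x \<Longrightarrow> j \<notin> x \<Longrightarrow> sym_diff x {i, j} = insert j (x - {i})"
  unfolding sym_diff_def by auto


lemma main_step:
  assumes X: "X \<subseteq> ksubsets n k" and qe: "quasi_exchange X" and le: "linear_extension X L"
    and j: "j < length L"
  shows "\<forall>p. p < j \<longrightarrow> card (L ! p - L ! j) = m \<longrightarrow>
    (\<exists>z<j. card (L ! z \<inter> L ! j) = k - 1 \<and> L ! p \<inter> L ! j \<subseteq> L ! z \<inter> L ! j)"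
proof (induction m rule: less_induct)
  case (less m)
  show ?case
  proof (intro allI impI)
    fix p assume pj: "p < j" and cm: "card (L ! p - L ! j) = m"
    define x where "x = L ! p"
    define y where "y = L ! j"
    have dist: "distinct L" and sL: "set L = X"
      and ord: "\<And>a b. a < length L \<Longrightarrow> b < length L \<Longrightarrow> bruhat_less (L ! a) (L ! b) \<Longrightarrow> a < b"
      using le unfolding linear_extension_def by auto
    have pl: "p < length L" using pj j by simp
    have xX: "x \<in> X" and yX: "y \<in> X" using pl j sL x_def y_def nth_mem by blast+
    have fx: "finite x" and fy: "finite y" and cx: "card x = k" and cy: "card y = k"
      using xX yX X unfolding ksubsets_def by (auto intro: finite_subset)
    have xy: "x \<noteq> y" using dist pl j pj x_def y_def nth_eq_iff_index_eq by fastforce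
    have ne1: "x - y \<noteq> {}"
    proof
      assume "x - y = {}"
      then have "x \<subseteq> y" by auto
      then show False using card_subset_eq[OF fy] cx cy xy by metis
    qed
    have ne2: "y - x \<noteq> {}"
    proof
      assume "y - x = {}"
      then have "y \<subseteq> x" by auto
      then show False using card_subset_eq[OF fx] cx cy xy by metis
    qed
    have idx: "\<And>w. w \<in> X \<Longrightarrow> \<exists>q < length L. L ! q = w" using sL by (metis in_set_conv_nth)
    show "\<exists>z<j. card (L ! z \<inter> L ! j) = k - 1 \<and> L ! p \<inter> L ! j \<subseteq> L ! z \<inter> L ! j"
    proof (cases "\<exists>a\<in>y - x. \<forall>m\<in>x - y. m < a")
      case True
      then obtain a where a: "a \<in> y - x" "\<forall>m\<in>x - y. m < a" by blast
      then obtain b where b: "b \<in> x - y" "sym_diff y {a, b} \<in> X"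
        using qe yX xX unfolding quasi_exchange_def by blast
      have ba: "b < a" using a b by blast
      have y': "sym_diff y {a, b} = insert b (y - {a})" using a b by (simp add: sym_diff_swap)
      obtain z where z: "z < length L" "L ! z = insert b (y - {a})" using idx b y' by metis
      have "bruhat_less (L ! z) (L ! j)" using z swap_bruhat[OF fy, of a b] a b ba y_def by auto
      then have zj: "z < j" using ord z j by blast
      have "L ! z \<inter> L ! j = y - {a}" using z a b y_def by auto
      moreover have "card (y - {a}) = k - 1" using a fy cy by simp
      moreover have "L ! p \<inter> L ! j \<subseteq> y - {a}" using a x_def y_def by auto
      ultimately show ?thesis using zj by (metis order_refl)
    next
      case False
      define i where "i = Max (x - y)"
      have ix: "i \<in> x - y" using ne1 fx i_def Max_in[of "x - y"] by blast
      have imax: "\<And>m. m \<in> x - y \<Longrightarrow> m \<le> i" using fx i_def by simp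
      have lt: "\<forall>m\<in>y - x. m < i"
      proof
        fix m assume m: "m \<in> y - x"
        then obtain m' where "m' \<in> x - y" "\<not> m' < m" using False by blast
        then have "m \<le> i" using imax by fastforce
        moreover have "m \<noteq> i" using m ix by auto
        ultimately show "m < i" by simp
      qed
      then obtain j' where j': "j' \<in> y - x" "sym_diff x {i, j'} \<in> X"
        using qe yX xX ix unfolding quasi_exchange_def by blast
      have ji: "j' < i" using lt j' by blast
      have x': "sym_diff x {i, j'} = insert j' (x - {i})" using ix j' by (simp add: sym_diff_swap)
      obtain p' where p': "p' < length L" "L ! p' = insert j' (x - {i})" using idx j' x' by metis
      have "bruhat_less (L ! p') (L ! p)" using p' swap_bruhat[OF fx, of i j'] ix j' ji x_def by auto
      then have pp: "p' < p" using ord p' pl by blast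
      show ?thesis
      proof (cases "insert j' (x - {i}) = y")
        case True
        have "L ! p \<inter> L ! j = x - {i}" using True ix j' x_def y_def by auto
        moreover have "card (x - {i}) = k - 1" using ix fx cx by simp
        ultimately show ?thesis using pj by auto
      next
        case False
        have "L ! p' - L ! j = (x - y) - {i}" using p' ix j' y_def by auto
        then have "card (L ! p' - L ! j) < m" using cm ix fx x_def y_def
          by (metis card_Diff1_less finite_Diff)
        then obtain z where z: "z < j" "card (L ! z \<inter> L ! j) = k - 1"
          "L ! p' \<inter> L ! j \<subseteq> L ! z \<inter> L ! j"
          using less.IH[OF \<open>card (L ! p' - L ! j) < m\<close>, rule_format, OF less_trans[OF pp pj] refl] by blast
        have "L ! p \<inter> L ! j \<subseteq> L ! p' \<inter> L ! j" using p' ix x_def y_def by auto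
        then show ?thesis using z by blast
      qed
    qed
  qed
qed

theorem theorem3p4:
  fixes n k :: nat and X :: "nat set set" and L :: "nat set list"
  assumes "0 < k" and "k \<le> n"
    and "X \<subseteq> ksubsets n k"
    and "quasi_exchange X"
    and "linear_extension X L"
    and "L \<noteq> []"
  shows "shelling_order n k L"
proof -
  have "L \<in> Conf n k" using assms unfolding Conf_def linear_extension_def by auto
  moreover have "\<exists>z < j. card (L ! z \<inter> L ! j) = k - 1 \<and> L ! i \<inter> L ! j \<subseteq> L ! z \<inter> L ! j"
    if "i < j" "j < length L" for i j
    using main_step[OF assms(3,4,5) that(2)] that(1) by blast
  ultimately show ?thesis unfolding shelling_order_def by blast
qed

end
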